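(* Let $G$ be a finite connected simple graph that has no spanning tree with at most $4$ leaves, and let $T$ be a maximal tree of $G$ with $5$ leaves (i.e., a subtree of $G$ with exactly $5$ leaves whose number of vertices is maximum among all subtrees of $G$ with exactly $5$ leaves). Then there is no tree $T'$ in $G$ such that $T'$ has at most $4$ leaves and $V(T')=V(T)$.
   Context: A leaf of a tree is a vertex of degree one in the tree. A tree in $G$ means a subgraph of $G$ that is a tree. *)

theory Defs
  imports Main
begin

definition simple_graph :: "'a set \<Rightarrow> 'a set set \<Rightarrow> bool" where
  "simple_graph V E \<longleftrightarrow> finite V \<and>
     (\<forall>e\<in>E. \<exists>u v. u \<noteq> v \<and> u \<in> V \<and> v \<in> V \<and> e = {u, v})"

definition adj_rel :: "'a set set \<Rightarrow> ('a \<times> 'a) set" where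
  "adj_rel E = {(u, v). {u, v} \<in> E}"

definition graph_connected :: "'a set \<Rightarrow> 'a set set \<Rightarrow> bool" where
  "graph_connected V E \<longleftrightarrow> V \<noteq> {} \<and> (\<forall>u\<in>V. \<forall>v\<in>V. (u, v) \<in> (adj_rel E)\<^sup>*)"

definition is_cycle :: "'a set set \<Rightarrow> 'a list \<Rightarrow> bool" where
  "is_cycle E cs \<longleftrightarrow> length cs \<ge> 3 \<and> distinct cs \<and>
     (\<forall>i < length cs - 1. {cs ! i, cs ! Suc i} \<in> E) \<and> {last cs, hd cs} \<in> E"

definition acyclic_graph :: "'a set \<Rightarrow> 'a set set \<Rightarrow> bool" where
  "acyclic_graph V E \<longleftrightarrow> \<not> (\<exists>cs. set cs \<subseteq> V \<and> is_cycle E cs)"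

definition is_tree :: "'a set \<Rightarrow> 'a set set \<Rightarrow> bool" where
  "is_tree V E \<longleftrightarrow> simple_graph V E \<and> graph_connected V E \<and> acyclic_graph V E"

definition subgraph :: "'a set \<Rightarrow> 'a set set \<Rightarrow> 'a set \<Rightarrow> 'a set set \<Rightarrow> bool" where
  "subgraph H F V E \<longleftrightarrow> H \<subseteq> V \<and> F \<subseteq> E \<and> (\<forall>e\<in>F. e \<subseteq> H)"

definition tree_in :: "'a set \<Rightarrow> 'a set set \<Rightarrow> 'a set \<Rightarrow> 'a set set \<Rightarrow> bool" where
  "tree_in H F V E \<longleftrightarrow> subgraph H F V E \<and> is_tree H F"

definition degree :: "'a set set \<Rightarrow> 'a \<Rightarrow> nat" where
  "degree E v = card {e\<in>E. v \<in> e}"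

definition leaves :: "'a set \<Rightarrow> 'a set set \<Rightarrow> 'a set" where
  "leaves V E = {v\<in>V. degree E v = 1}"

definition spanning_tree :: "'a set set \<Rightarrow> 'a set \<Rightarrow> 'a set set \<Rightarrow> bool" where
  "spanning_tree F V E \<longleftrightarrow> tree_in V F V E"

definition maximal_tree_with_leaves ::
  "nat \<Rightarrow> 'a set \<Rightarrow> 'a set set \<Rightarrow> 'a set \<Rightarrow> 'a set set \<Rightarrow> bool" where
  "maximal_tree_with_leaves k H F V E \<longleftrightarrow> tree_in H F V E \<and> card (leaves H F) = k \<and>
     (\<forall>H' F'. tree_in H' F' V E \<and> card (leaves H' F') = k \<longrightarrow> card H' \<le> card H)"

end

theory Submission
  imports Defs
begin

lemma sg_finite_E: "simple_graph V E \<Longrightarrow> finite E"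
proof -
  assume a: "simple_graph V E"
  have "E \<subseteq> Pow V" using a unfolding simple_graph_def by auto
  moreover have "finite V" using a unfolding simple_graph_def by auto
  ultimately show ?thesis by (meson finite_Pow_iff rev_finite_subset)
qed

lemma exit_edge:
  assumes "(x, y) \<in> R\<^sup>*" "x \<in> S" "y \<notin> S"
  shows "\<exists>a b. (a, b) \<in> R \<and> a \<in> S \<and> b \<notin> S"
  using assms by (induction rule: rtrancl_induct) blast+

lemma extend_tree_tree:
  assumes sg: "simple_graph V E" and t: "tree_in H' F' V E" and wV: "w \<in> V"
    and wH: "w \<notin> H'" and uH: "u \<in> H'" and uw: "{u, w} \<in> E"
  shows "tree_in (insert w H') (insert {u, w} F') V E"
proof -
  have sub: "H' \<subseteq> V" "F' \<subseteq> E" "\<forall>e\<in>F'. e \<subseteq> H'"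
    using t unfolding tree_in_def subgraph_def by auto
  have tr: "simple_graph H' F'" "graph_connected H' F'" "acyclic_graph H' F'"
    using t unfolding tree_in_def is_tree_def by auto
  have uw_ne: "u \<noteq> w" using uH wH by auto
  let ?F = "insert {u, w} F'"
  let ?H = "insert w H'"
  have s1: "subgraph ?H ?F V E" using sub uH wV uw unfolding subgraph_def by auto
  have s2: "simple_graph ?H ?F" using tr(1) uw_ne uH unfolding simple_graph_def by blast
  have mono: "(adj_rel F')\<^sup>* \<subseteq> (adj_rel ?F)\<^sup>*"
    by (rule rtrancl_mono) (auto simp: adj_rel_def)
  have e1: "(u, w) \<in> (adj_rel ?F)\<^sup>*" by (auto simp: adj_rel_def)
  have e2: "(w, u) \<in> (adj_rel ?F)\<^sup>*" by (auto simp: adj_rel_def insert_commute)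
  have c0: "\<forall>a\<in>H'. \<forall>b\<in>H'. (a, b) \<in> (adj_rel ?F)\<^sup>*"
    using tr(2) mono unfolding graph_connected_def by blast
  have s3: "graph_connected ?H ?F"
    unfolding graph_connected_def
  proof (intro conjI ballI)
    show "?H \<noteq> {}" by simp
  next
    fix a b assume a: "a \<in> ?H" and b: "b \<in> ?H"
    show "(a, b) \<in> (adj_rel ?F)\<^sup>*"
    proof (cases "a = w")
      case True
      show ?thesis
      proof (cases "b = w")
        case True with \<open>a = w\<close> show ?thesis by simp
      next
        case False
        then have "b \<in> H'" using b by simp
        then show ?thesis using \<open>a = w\<close> e2 c0 uH by (meson rtrancl_trans)
      qed
    next
      case False
      then have aH: "a \<in> H'" using a by simp
      show ?thesis
      proof (cases "b = w")
        case True
        then show ?thesis using aH e1 c0 uH by (meson rtrancl_trans)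
      next
        case False
        then show ?thesis using aH b c0 by simp
      qed
    qed
  qed
  have key: "\<And>x. {w, x} \<in> ?F \<Longrightarrow> x \<noteq> w \<Longrightarrow> x = u"
  proof -
    fix x assume a: "{w, x} \<in> ?F" "x \<noteq> w"
    have "{w, x} \<notin> F'" using sub(3) wH by auto
    then have "{w, x} = {u, w}" using a by auto
    then show "x = u" using a(2) by (auto simp: doubleton_eq_iff)
  qed
  have s4: "acyclic_graph ?H ?F"
    unfolding acyclic_graph_def
  proof
    assume "\<exists>cs. set cs \<subseteq> ?H \<and> is_cycle ?F cs"
    then obtain cs where cs: "set cs \<subseteq> ?H" "is_cycle ?F cs" by blast
    define n where "n = length cs"
    have n3: "n \<ge> 3" and dist: "distinct cs"
      and ed: "\<forall>i < n - 1. {cs ! i, cs ! Suc i} \<in> ?F" and cl: "{last cs, hd cs} \<in> ?F"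
      using cs(2) unfolding is_cycle_def n_def by auto
    have ne: "cs \<noteq> []" using n3 n_def by auto
    have lastn: "last cs = cs ! (n - 1)" using ne n_def by (simp add: last_conv_nth)
    have hdn: "hd cs = cs ! 0" using ne by (simp add: hd_conv_nth)
    have inj: "\<And>j k. j < n \<Longrightarrow> k < n \<Longrightarrow> cs ! j = cs ! k \<Longrightarrow> j = k"
      using dist n_def nth_eq_iff_index_eq by blast
    show False
    proof (cases "w \<in> set cs")
      case False
      have "is_cycle F' cs"
        unfolding is_cycle_def
      proof (intro conjI allI impI)
        show "3 \<le> length cs" using n3 n_def by simp
        show "distinct cs" by (rule dist)
      next
        fix i assume i: "i < length cs - 1"
        have "cs ! i \<in> set cs" "cs ! Suc i \<in> set cs" using i by auto
        then have "{cs ! i, cs ! Suc i} \<noteq> {u, w}" using False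
          by (metis (no_types, lifting) insert_iff singletonD)
        then show "{cs ! i, cs ! Suc i} \<in> F'" using ed i n_def by auto
      next
        have "last cs \<in> set cs" "hd cs \<in> set cs" using ne by auto
        then have "{last cs, hd cs} \<noteq> {u, w}" using False
          by (metis (no_types, lifting) insert_iff singletonD)
        then show "{last cs, hd cs} \<in> F'" using cl by auto
      qed
      moreover have "set cs \<subseteq> H'" using cs(1) False by auto
      ultimately show False using tr(3) unfolding acyclic_graph_def by blast
    next
      case True
      then obtain i where i: "i < n" "cs ! i = w" by (metis in_set_conv_nth n_def)
      have nb: "\<And>j. j < n \<Longrightarrow> j \<noteq> i \<Longrightarrow> {w, cs ! j} \<in> ?F \<Longrightarrow> cs ! j = u"
      proof -
        fix j assume j: "j < n" "j \<noteq> i" "{w, cs ! j} \<in> ?F"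
        have "cs ! j \<noteq> w" using inj[of j i] j i by auto
        then show "cs ! j = u" using key j(3) by blast
      qed
      show False
      proof (cases "i = 0")
        case True
        have a1: "{w, cs ! 1} \<in> ?F" using ed n3 i True by (metis One_nat_def less_diff_conv numeral_3_eq_3 Suc_le_lessD add_Suc_right plus_1_eq_Suc le_add_diff_inverse2 less_numeral_extra(4) add_2_eq_Suc' diff_Suc_1 order.strict_trans1 numeral_2_eq_2 Suc_lessD zero_less_Suc)
        have a2: "{w, cs ! (n - 1)} \<in> ?F" using cl lastn hdn True i by (simp add: insert_commute)
        have "cs ! 1 = u" using nb[of 1] a1 True n3 by auto
        moreover have "cs ! (n - 1) = u" using nb[of "n - 1"] a2 True n3 by auto
        ultimately show False using inj[of 1 "n - 1"] n3 by auto
      next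
        case False
        show False
        proof (cases "i = n - 1")
          case True
          have a1: "{w, cs ! (n - 2)} \<in> ?F"
          proof -
            have "{cs ! (n - 2), cs ! Suc (n - 2)} \<in> ?F" using ed n3 by auto
            moreover have "Suc (n - 2) = i" using True n3 by auto
            ultimately show ?thesis using i by (simp add: insert_commute)
          qed
          have a2: "{w, cs ! 0} \<in> ?F" using cl lastn hdn True i by simp
          have "cs ! (n - 2) = u" using nb[of "n - 2"] a1 True n3 by auto
          moreover have "cs ! 0 = u" using nb[of 0] a2 False n3 by auto
          ultimately show False using inj[of 0 "n - 2"] n3 by auto
        next
          case False2: False
          have a1: "{w, cs ! (i - 1)} \<in> ?F"
          proof -
            have "i - 1 < n - 1" using i False by auto
            then have "{cs ! (i - 1), cs ! Suc (i - 1)} \<in> ?F" using ed by blast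
            moreover have "Suc (i - 1) = i" using False by auto
            ultimately show ?thesis using i by (simp add: insert_commute)
          qed
          have a2: "{w, cs ! (i + 1)} \<in> ?F"
          proof -
            have "i < n - 1" using i False2 by auto
            then have "{cs ! i, cs ! Suc i} \<in> ?F" using ed by blast
            then show ?thesis using i by simp
          qed
          have "cs ! (i - 1) = u" using nb[of "i - 1"] a1 i False by auto
          moreover have "cs ! (i + 1) = u" using nb[of "i + 1"] a2 i False2 by auto
          ultimately have "cs ! (i - 1) = cs ! (i + 1)" by simp
          moreover have "i + 1 < n" "i - 1 < n" using i False2 by auto
          ultimately have "i - 1 = i + 1" using inj by blast
          then show False using False by simp
        qed
      qed
    qed
  qed
  show ?thesis unfolding tree_in_def is_tree_def using s1 s2 s3 s4 by auto
qed

lemma extend_tree_leaves: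
  assumes sg: "simple_graph V E" and t: "tree_in H' F' V E"
    and wH: "w \<notin> H'" and uH: "u \<in> H'"
  shows "card (leaves (insert w H') (insert {u, w} F')) \<le> card (leaves H' F') + 1 \<or>
         card (leaves (insert w H') (insert {u, w} F')) \<le> 2"
proof -
  have sub: "F' \<subseteq> E" "\<forall>e\<in>F'. e \<subseteq> H'"
    using t unfolding tree_in_def subgraph_def by auto
  have tr: "simple_graph H' F'" "graph_connected H' F'"
    using t unfolding tree_in_def is_tree_def by auto
  have finF: "finite F'" using sub(1) sg_finite_E[OF sg] finite_subset by blast
  have finH: "finite H'" using tr(1) unfolding simple_graph_def by auto
  let ?F = "insert {u, w} F'"
  let ?H = "insert w H'"
  have uwF: "{u, w} \<notin> F'" using sub(2) wH by auto
  have dv: "degree ?F v = degree F' v" if "v \<in> H'" "v \<noteq> u" for v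
  proof -
    have "{e \<in> ?F. v \<in> e} = {e \<in> F'. v \<in> e}" using that wH by auto
    then show ?thesis unfolding degree_def by simp
  qed
  have du: "degree ?F u = degree F' u + 1"
  proof -
    have "{e \<in> ?F. u \<in> e} = insert {u, w} {e \<in> F'. u \<in> e}" by auto
    moreover have "finite {e \<in> F'. u \<in> e}" using finF by simp
    ultimately show ?thesis unfolding degree_def using uwF by simp
  qed
  show ?thesis
  proof (cases "degree F' u = 0")
    case True
    have "F' = {}"
    proof (rule ccontr)
      assume "F' \<noteq> {}"
      then obtain e where e: "e \<in> F'" by blast
      then obtain a b where ab: "a \<noteq> b" "a \<in> H'" "e = {a, b}"
        using tr(1) unfolding simple_graph_def by blast
      have "\<exists>e'\<in>F'. u \<in> e'"
      proof (cases "a = u")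
        case True then show ?thesis using e ab by auto
      next
        case False
        have "(u, a) \<in> (adj_rel F')\<^sup>*" using tr(2) uH ab unfolding graph_connected_def by blast
        then obtain y where "(u, y) \<in> adj_rel F'" using False by (metis converse_rtranclE)
        then show ?thesis unfolding adj_rel_def by auto
      qed
      then have "{e \<in> F'. u \<in> e} \<noteq> {}" by auto
      then have "degree F' u \<noteq> 0" unfolding degree_def using finF by simp
      then show False using True by simp
    qed
    have "leaves ?H ?F \<subseteq> {u, w}"
    proof
      fix v assume v: "v \<in> leaves ?H ?F"
      show "v \<in> {u, w}"
      proof (rule ccontr)
        assume nv: "v \<notin> {u, w}"
        then have "v \<in> H'" using v unfolding leaves_def by auto
        then have "degree ?F v = degree F' v" using dv nv by auto
        also have "... = 0" using \<open>F' = {}\<close> unfolding degree_def by simp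
        finally show False using v unfolding leaves_def by simp
      qed
    qed
    then have "card (leaves ?H ?F) \<le> card {u, w}" by (simp add: card_mono)
    also have "... \<le> 2" by (simp add: card_insert_if)
    finally show ?thesis by simp
  next
    case False
    have "leaves ?H ?F \<subseteq> insert w (leaves H' F')"
    proof
      fix v assume v: "v \<in> leaves ?H ?F"
      show "v \<in> insert w (leaves H' F')"
      proof (cases "v = w")
        case True then show ?thesis by simp
      next
        case nw: False
        have vH: "v \<in> H'" using v nw unfolding leaves_def by auto
        have "v \<noteq> u" using v du False unfolding leaves_def by auto
        then show ?thesis using dv vH v unfolding leaves_def by auto
      qed
    qed
    moreover have "finite (leaves H' F')" using finH unfolding leaves_def by simp
    ultimately have "card (leaves ?H ?F) \<le> card (insert w (leaves H' F'))"
      by (simp add: card_mono)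
    also have "... \<le> card (leaves H' F') + 1"
      using \<open>finite (leaves H' F')\<close> by (simp add: card_insert_if)
    finally show ?thesis by simp
  qed
qed

lemma grow:
  assumes sg: "simple_graph V E" and gc: "graph_connected V E"
    and ns: "\<not> (\<exists>F'. spanning_tree F' V E \<and> card (leaves V F') \<le> 4)"
    and mx: "maximal_tree_with_leaves 5 H F V E"
  shows "tree_in H' F' V E \<Longrightarrow> H \<subseteq> H' \<Longrightarrow> card (leaves H' F') \<le> 4 \<Longrightarrow> False"
proof (induction "card V - card H'" arbitrary: H' F' rule: less_induct)
  case less
  have finV: "finite V" using sg unfolding simple_graph_def by auto
  have HV: "H' \<subseteq> V" using less.prems(1) unfolding tree_in_def subgraph_def by auto
  have Hne: "H' \<noteq> {}" using less.prems(1) unfolding tree_in_def is_tree_def graph_connected_def by auto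
  have "H' \<noteq> V"
  proof
    assume "H' = V"
    then have "spanning_tree F' V E" using less.prems(1) unfolding spanning_tree_def by simp
    then show False using ns less.prems(3) \<open>H' = V\<close> by blast
  qed
  then obtain y where y: "y \<in> V" "y \<notin> H'" using HV by blast
  obtain x where x: "x \<in> H'" using Hne by blast
  have "(x, y) \<in> (adj_rel E)\<^sup>*" using gc x y HV unfolding graph_connected_def by blast
  then obtain u w where uw: "(u, w) \<in> adj_rel E" "u \<in> H'" "w \<notin> H'"
    using exit_edge[OF \<open>(x, y) \<in> (adj_rel E)\<^sup>*\<close> x y(2)] by blast
  have uwE: "{u, w} \<in> E" using uw unfolding adj_rel_def by simp
  have "\<forall>e\<in>E. e \<subseteq> V" using sg unfolding simple_graph_def by auto
  then have wV: "w \<in> V" using uwE by blast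
  let ?F = "insert {u, w} F'"
  let ?H = "insert w H'"
  have tH: "tree_in ?H ?F V E" by (rule extend_tree_tree[OF sg less.prems(1) wV uw(3) uw(2) uwE])
  have lc: "card (leaves ?H ?F) \<le> 5"
    using extend_tree_leaves[OF sg less.prems(1) uw(3) uw(2)] less.prems(3) by linarith
  have finH: "finite H'" using HV finV finite_subset by blast
  have cH: "card ?H = card H' + 1" using finH uw(3) by simp
  have cHV: "card ?H \<le> card V" using HV wV finV by (simp add: card_mono)
  show False
  proof (cases "card (leaves ?H ?F) = 5")
    case True
    then have "card ?H \<le> card H" using mx tH unfolding maximal_tree_with_leaves_def by blast
    moreover have "card H \<le> card H'" using less.prems(2) finH by (simp add: card_mono)
    ultimately show False using cH by simp
  next
    case False
    then have "card (leaves ?H ?F) \<le> 4" using lc by simp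
    moreover have "card V - card ?H < card V - card H'" using cH cHV by simp
    moreover have "H \<subseteq> ?H" using less.prems(2) by blast
    ultimately show False using less.hyps[OF _ tH] by blast
  qed
qed

theorem lemma2p1:
  fixes V :: "'a set" and E :: "'a set set" and H :: "'a set" and F :: "'a set set"
  assumes "simple_graph V E"
    and "graph_connected V E"
    and "\<not> (\<exists>F'. spanning_tree F' V E \<and> card (leaves V F') \<le> 4)"
    and "maximal_tree_with_leaves 5 H F V E"
  shows "\<not> (\<exists>H' F'. tree_in H' F' V E \<and> card (leaves H' F') \<le> 4 \<and> H' = H)"
  using grow[OF assms] by blast

end
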